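(* Let $C\subseteq\mathbb{R}^2$ be a square and $S$ the family of all squares in $\mathbb{R}^2$. Then $\mathrm{PropEF}(C,2,S)\ge 1/4$.
   Context: A value measure on $C$ is $V(X)=\int_X v$ with $v$ non-negative, bounded, integrable on $C$, $V(C)<\infty$; $V^S(X):=\sup\{V(s):s\in S,s\subseteq X\}$. For $n$ agents with value measures $V_1,\dots,V_n$, an $S$-allocation is $(X_1,\dots,X_n)$ with $X_i\in S$ pairwise disjoint and $\bigcup_i X_i\subseteq C$; it is envy-free if $V_i^S(X_i)\ge V_i^S(X_j)$ for all $i,j$. $\mathrm{PropEF}(C,n,S):=\inf_{V_1,\dots,V_n}\sup_X\min_i V_i(X_i)/V_i(C)$, the infimum over all $n$-tuples of value measures on $C$ and the supremum over envy-free $S$-allocations. *)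

theory Defs
  imports "HOL-Analysis.Analysis"
begin

definition is_square :: "(real^2) set \<Rightarrow> bool" where
  "is_square Q \<longleftrightarrow>
     (\<exists>c u w r. r > 0 \<and> norm u = 1 \<and> norm w = 1 \<and> u \<bullet> w = 0 \<and>
        Q = {c + (a * r) *\<^sub>R u + (b * r) *\<^sub>R w | a b. a \<in> {0..1} \<and> b \<in> {0..1}})"

definition value_density :: "(real^2 \<Rightarrow> real) \<Rightarrow> (real^2) set \<Rightarrow> bool" where
  "value_density v C \<longleftrightarrow>
     (\<forall>x\<in>C. 0 \<le> v x) \<and> bounded (v ` C) \<and> v integrable_on C \<and> 0 < integral C v"

definition val :: "(real^2 \<Rightarrow> real) \<Rightarrow> (real^2) set \<Rightarrow> real" where
  "val v X = integral X v"

definition val_S :: "(real^2 \<Rightarrow> real) \<Rightarrow> (real^2) set \<Rightarrow> real" where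
  "val_S v X = Sup {val v s | s. is_square s \<and> s \<subseteq> X}"

definition ef_square_alloc2 ::
  "(real^2) set \<Rightarrow> (real^2 \<Rightarrow> real) \<Rightarrow> (real^2 \<Rightarrow> real) \<Rightarrow> (real^2) set \<Rightarrow> (real^2) set \<Rightarrow> bool" where
  "ef_square_alloc2 C v1 v2 X1 X2 \<longleftrightarrow>
     is_square X1 \<and> is_square X2 \<and> X1 \<union> X2 \<subseteq> C \<and>
     interior X1 \<inter> interior X2 = {} \<and>
     val_S v1 X1 \<ge> val_S v1 X2 \<and> val_S v2 X2 \<ge> val_S v2 X1"

end

theory Submission
  imports Defs
begin


definition gmap :: "real^2 \<Rightarrow> real^2 \<Rightarrow> real^2 \<Rightarrow> real \<Rightarrow> real^2 \<Rightarrow> real^2" where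
  "gmap c u w r p = c + (p$1 * r) *\<^sub>R u + (p$2 * r) *\<^sub>R w"

definition vbox :: "real \<Rightarrow> real \<Rightarrow> real \<Rightarrow> real \<Rightarrow> (real^2) set" where
  "vbox a b a' b' = cbox (vector[a,b]) (vector[a',b'])"

lemma mem_vbox: "p \<in> vbox a b a' b' \<longleftrightarrow> a \<le> p$1 \<and> p$1 \<le> a' \<and> b \<le> p$2 \<and> p$2 \<le> b'"
  unfolding vbox_def mem_box_cart forall_2 by auto

lemma mem_vbox_int: "p \<in> interior (vbox a b a' b') \<longleftrightarrow> a < p$1 \<and> p$1 < a' \<and> b < p$2 \<and> p$2 < b'"
  unfolding vbox_def interior_cbox mem_box_cart forall_2 by auto

lemma vec2_eq: "p = vector[p$1, p$2]" for p :: "real^2"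
  by (simp add: vec_eq_iff forall_2)

lemma sq_image:
  assumes "s > 0"
  shows "gmap c u w r ` vbox x y (x+s) (y+s) =
    {gmap c u w r (vector[x,y]) + (a*(s*r)) *\<^sub>R u + (b*(s*r)) *\<^sub>R w | a b. a\<in>{0..1} \<and> b\<in>{0..1}}"
proof (intro set_eqI iffI)
  fix q assume "q \<in> gmap c u w r ` vbox x y (x+s) (y+s)"
  then obtain p where p: "p \<in> vbox x y (x+s) (y+s)" "q = gmap c u w r p" by auto
  define a where "a = (p$1 - x)/s"
  define b where "b = (p$2 - y)/s"
  have "a \<in> {0..1}" "b \<in> {0..1}" using p(1) assms by (auto simp: mem_vbox a_def b_def field_simps)
  moreover have "p$1 = x + a * s" "p$2 = y + b * s" using assms by (auto simp: a_def b_def)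
  then have "q = gmap c u w r (vector[x,y]) + (a*(s*r)) *\<^sub>R u + (b*(s*r)) *\<^sub>R w"
    using p(2) by (simp add: gmap_def algebra_simps)
  ultimately show "q \<in> {gmap c u w r (vector[x,y]) + (a*(s*r)) *\<^sub>R u + (b*(s*r)) *\<^sub>R w | a b. a\<in>{0..1} \<and> b\<in>{0..1}}"
    by blast
next
  fix q assume "q \<in> {gmap c u w r (vector[x,y]) + (a*(s*r)) *\<^sub>R u + (b*(s*r)) *\<^sub>R w | a b. a\<in>{0..1} \<and> b\<in>{0..1}}"
  then obtain a b where ab: "a\<in>{0..1}" "b\<in>{0..1}" "q = gmap c u w r (vector[x,y]) + (a*(s*r)) *\<^sub>R u + (b*(s*r)) *\<^sub>R w"
    by blast
  have "vector[x + a * s, y + b * s] \<in> vbox x y (x+s) (y+s)" using ab assms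
    by (auto simp: mem_vbox mult_le_cancel_right1)
  moreover have "q = gmap c u w r (vector[x + a * s, y + b * s])" using ab(3) by (simp add: gmap_def algebra_simps)
  ultimately show "q \<in> gmap c u w r ` vbox x y (x+s) (y+s)" by blast
qed

lemma is_square_image:
  assumes "s > 0" "r > 0" "norm u = 1" "norm w = 1" "u \<bullet> w = 0"
  shows "is_square (gmap c u w r ` vbox x y (x+s) (y+s))"
  unfolding is_square_def sq_image[OF assms(1)]
  by (rule exI[of _ "gmap c u w r (vector[x,y])"], rule exI[of _ u], rule exI[of _ w], rule exI[of _ "s*r"]) (use assms in auto)



definition lmap :: "real^2 \<Rightarrow> real^2 \<Rightarrow> real \<Rightarrow> real^2 \<Rightarrow> real^2" where
  "lmap u w r p = (p$1 * r) *\<^sub>R u + (p$2 * r) *\<^sub>R w"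

lemma linear_lmap: "linear (lmap u w r)"
  by (rule linearI) (simp_all add: lmap_def algebra_simps)

lemma gmap_lmap: "gmap c u w r p = c + lmap u w r p"
  by (simp add: gmap_def lmap_def add.assoc)

lemma cov_gmap:
  fixes v :: "real^2 \<Rightarrow> real"
  assumes r: "r > 0" and u: "norm u = 1" and w: "norm w = 1" and uw: "u \<bullet> w = 0"
    and nn: "\<And>y. y \<in> gmap c u w r ` S \<Longrightarrow> 0 \<le> v y"
  shows "((\<lambda>x. \<bar>det (matrix (lmap u w r))\<bar> * v (gmap c u w r x)) has_integral b) S \<longleftrightarrow>
         (v has_integral b) (gmap c u w r ` S)"
proof -
  define h where "h y = (vector[((y-c)\<bullet>u)/r, ((y-c)\<bullet>w)/r] :: real^2)" for y
  define h' where "h' z = (vector[(z\<bullet>u)/r, (z\<bullet>w)/r] :: real^2)" for z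
  have uu: "u \<bullet> u = 1" using u by (simp add: norm_eq_sqrt_inner)
  have ww: "w \<bullet> w = 1" using w by (simp add: norm_eq_sqrt_inner)
  have wu: "w \<bullet> u = 0" using uw by (simp add: inner_commute)
  have hl: "h' (lmap u w r z) = z" for z
    using r by (simp add: h'_def lmap_def inner_add_left uu ww uw wu vec2_eq[symmetric])
  have hg: "h (gmap c u w r x) = x" for x
    using hl[of x] by (simp add: h_def h'_def gmap_lmap)
  have der: "(gmap c u w r has_derivative lmap u w r) (at x within S)" for x
    unfolding gmap_lmap[abs_def]
    by (intro derivative_eq_intros) (auto intro: linear_imp_has_derivative linear_lmap)
  have lh: "linear h'"
    by (rule linearI) (simp_all add: h'_def vec_eq_iff forall_2 inner_add_left add_divide_distrib)
  have hh: "h = (\<lambda>y. h' y - h' c)"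
    using linear_diff[OF lh] by (auto simp: h_def h'_def fun_eq_iff vec_eq_iff forall_2 inner_diff_left diff_divide_distrib)
  have derh: "(h has_derivative h') (at y within T)" for y T
    unfolding hh by (intro derivative_eq_intros) (auto intro: linear_imp_has_derivative lh)
  show ?thesis
    apply (rule cov_invertible_nonneg_eq[where h=h and h'="\<lambda>_. h'"])
    using der derh nn hg hl by (auto simp: o_def fun_eq_iff)
qed


definition U :: "(real^2) set" where "U = vbox 0 0 1 1"

lemma sq_eq_image:
  assumes "r > 0"
  shows "{c + (a * r) *\<^sub>R u + (b * r) *\<^sub>R w | a b. a \<in> {0..1} \<and> b \<in> {0..1}} = gmap c u w r ` U"
  using sq_image[of 1 c u w r 0 0] by (simp add: U_def gmap_def)

lemma continuous_gmap: "continuous_on S (gmap c u w r)"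
  unfolding gmap_def by (intro continuous_intros)

lemma compact_U: "compact U" by (simp add: U_def vbox_def)

lemma square_compact: "is_square s \<Longrightarrow> compact s"
  unfolding is_square_def
proof (elim exE conjE)
  fix c u w r assume "r > 0" and s: "s = {c + (a * r) *\<^sub>R u + (b * r) *\<^sub>R w | a b. a \<in> {0..1} \<and> b \<in> {0..1}}"
  then have "s = gmap c u w r ` U" using sq_eq_image by blast
  then show "compact s" using compact_continuous_image[OF continuous_gmap compact_U] by simp
qed

lemma val_S_eq:
  assumes vd: "value_density v C" and X: "is_square X" "X \<subseteq> C"
  shows "val_S v X = val v X"
proof -
  have ai: "v absolutely_integrable_on C"
    using vd by (auto simp: value_density_def intro!: nonnegative_absolutely_integrable_1)
  have int: "v integrable_on s" if "is_square s" "s \<subseteq> C" for s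
  proof -
    have "s \<in> sets lebesgue" using square_compact[OF that(1)] lmeasurable_compact fmeasurableD by blast
    then have "v absolutely_integrable_on s" using set_integrable_subset[OF ai _ that(2)] by blast
    then show ?thesis using absolutely_integrable_on_def by blast
  qed
  show ?thesis unfolding val_S_def
  proof (rule cSup_eq_maximum)
    show "val v X \<in> {val v s |s. is_square s \<and> s \<subseteq> X}" using X by blast
  next
    fix x assume "x \<in> {val v s |s. is_square s \<and> s \<subseteq> X}"
    then obtain s where s: "x = val v s" "is_square s" "s \<subseteq> X" by blast
    show "x \<le> val v X" unfolding s(1) val_def
      by (rule integral_subset_le) (use s X int vd in \<open>auto simp: value_density_def\<close>)
  qed
qed

lemma val_image:
  fixes v :: "real^2 \<Rightarrow> real"
  assumes r: "r > 0" and u: "norm u = 1" and w: "norm w = 1" and uw: "u \<bullet> w = 0"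
    and vd: "value_density v (gmap c u w r ` U)"
  defines "K \<equiv> \<bar>det (matrix (lmap u w r))\<bar>"
  shows "K > 0" "(\<lambda>x. v (gmap c u w r x)) integrable_on U"
    "\<And>a b a' b'. vbox a b a' b' \<subseteq> U \<Longrightarrow> val v (gmap c u w r ` vbox a b a' b') = K * integral (vbox a b a' b') (\<lambda>x. v (gmap c u w r x))"
proof -
  let ?g = "gmap c u w r"
  note vd' = vd[unfolded value_density_def]
  have nn: "\<And>y. y \<in> ?g ` U \<Longrightarrow> 0 \<le> v y" using vd' by blast
  have "(v has_integral (integral (?g ` U) v)) (?g ` U)" using vd' by (simp add: integrable_integral)
  then have hi: "((\<lambda>x. K * v (?g x)) has_integral (integral (?g ` U) v)) U"
    using cov_gmap[where c=c and S=U and v=v, OF r u w uw nn] unfolding K_def by simp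
  have pos: "integral (?g ` U) v > 0" using vd' by blast
  show Kp: "K > 0"
  proof (rule ccontr)
    assume "\<not> K > 0"
    then have "K = 0" unfolding K_def by simp
    with hi have "((\<lambda>x. 0) has_integral (integral (?g ` U) v)) U" by simp
    then have "integral (?g ` U) v = 0" using has_integral_unique has_integral_0 by blast
    then show False using pos by simp
  qed
  have "(\<lambda>x. K * v (?g x)) integrable_on U" using hi by blast
  then show fi: "(\<lambda>x. v (?g x)) integrable_on U"
    using Kp by simp
  fix a b a' b' assume sub: "vbox a b a' b' \<subseteq> U"
  have fi2: "(\<lambda>x. v (?g x)) integrable_on vbox a b a' b'"
    using integrable_on_subcbox[OF fi[unfolded U_def vbox_def]] sub by (simp add: U_def vbox_def)
  have nn2: "\<And>y. y \<in> ?g ` vbox a b a' b' \<Longrightarrow> 0 \<le> v y" using nn sub by blast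
  have "((\<lambda>x. K * v (?g x)) has_integral (K * integral (vbox a b a' b') (\<lambda>x. v (?g x)))) (vbox a b a' b')"
    by (rule has_integral_mult_right[OF integrable_integral[OF fi2]])
  then have "(v has_integral (K * integral (vbox a b a' b') (\<lambda>x. v (?g x)))) (?g ` vbox a b a' b')"
    using cov_gmap[where c=c and S="vbox a b a' b'" and v=v, OF r u w uw nn2] unfolding K_def by simp
  then show "val v (?g ` vbox a b a' b') = K * integral (vbox a b a' b') (\<lambda>x. v (?g x))"
    unfolding val_def by (rule integral_unique)
qed



abbreviation cnt :: "(real^2) set \<Rightarrow> real" where "cnt S \<equiv> Henstock_Kurzweil_Integration.content S"

lemma prod2: "prod f (UNIV::2 set) = f 1 * f 2"
  unfolding UNIV_2 by simp

lemma content_vbox: "a \<le> a' \<Longrightarrow> b \<le> b' \<Longrightarrow> cnt (vbox a b a' b') = (a'-a)*(b'-b)"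
proof -
  assume "a \<le> a'" "b \<le> b'"
  then have ne: "cbox (vector[a,b]) (vector[a',b']) \<noteq> ({} :: (real^2) set)"
    using mem_vbox[of "vector[a,b]" a b a' b'] by (auto simp: vbox_def)
  show ?thesis unfolding vbox_def content_cbox_cart[OF ne] prod2 by simp
qed
lemma vbox_sub: "a0 \<le> a \<Longrightarrow> b0 \<le> b \<Longrightarrow> a' \<le> a0' \<Longrightarrow> b' \<le> b0' \<Longrightarrow> vbox a b a' b' \<subseteq> vbox a0 b0 a0' b0'"
  by (auto simp: mem_vbox)

lemma int_sub: "f integrable_on U \<Longrightarrow> vbox a b a' b' \<subseteq> U \<Longrightarrow> f integrable_on vbox a b a' b'" for f :: "real^2 \<Rightarrow> real"
  unfolding vbox_def by (rule integrable_on_subcbox)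

lemma box_diff:
  fixes f :: "real^2 \<Rightarrow> real"
  assumes fi: "f integrable_on U" and bd: "\<forall>x\<in>U. 0 \<le> f x \<and> f x \<le> M"
    and P: "P = vbox a b a' b'" and Q: "Q = vbox c d c' d'" and PQ: "P \<subseteq> Q" "Q \<subseteq> U"
  shows "0 \<le> integral Q f - integral P f" "integral Q f - integral P f \<le> M * (cnt Q - cnt P)"
proof -
  have fQ: "f integrable_on Q" using int_sub[OF fi] PQ Q by blast
  have fP: "f integrable_on P" using int_sub[OF fi] PQ P by blast
  show "0 \<le> integral Q f - integral P f"
    using integral_subset_le[OF PQ(1) fP fQ] bd PQ by auto
  let ?fQ = "\<lambda>x. if x \<in> Q then f x else 0"
  let ?fP = "\<lambda>x. if x \<in> P then f x else 0"
  let ?MQ = "\<lambda>x. if x \<in> Q then M else 0"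
  let ?MP = "\<lambda>x. if x \<in> P then M else 0"
  have i1: "?fQ integrable_on UNIV" "?fP integrable_on UNIV"
    by (rule integrable_restrict_UNIV[THEN iffD2, OF fQ], rule integrable_restrict_UNIV[THEN iffD2, OF fP])
  have cQ: "(\<lambda>x. M) integrable_on Q" "(\<lambda>x. M) integrable_on P" unfolding P Q vbox_def by (rule integrable_const)+
  have i2: "?MQ integrable_on UNIV" "?MP integrable_on UNIV"
    by (rule integrable_restrict_UNIV[THEN iffD2, OF cQ(1)], rule integrable_restrict_UNIV[THEN iffD2, OF cQ(2)])
  have "integral Q f - integral P f = integral UNIV (\<lambda>x. ?fQ x - ?fP x)"
    by (simp only: integral_diff[OF i1] integral_restrict_UNIV)
  also have "\<dots> \<le> integral UNIV (\<lambda>x. ?MQ x - ?MP x)"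
  proof (rule integral_le)
    show "(\<lambda>x. ?fQ x - ?fP x) integrable_on UNIV" using i1 by (rule integrable_diff)
    show "(\<lambda>x. ?MQ x - ?MP x) integrable_on UNIV" using i2 by (rule integrable_diff)
    fix x :: "real^2"
    show "?fQ x - ?fP x \<le> ?MQ x - ?MP x"
    proof (cases "x \<in> P")
      case True then show ?thesis using PQ by auto
    next
      case False
      show ?thesis
      proof (cases "x \<in> Q")
        case True then have "f x \<le> M" using bd PQ by blast
        then show ?thesis using True False by simp
      qed (use False in simp)
    qed
  qed
  also have "\<dots> = integral Q (\<lambda>x. M) - integral P (\<lambda>x. M)"
    by (simp only: integral_diff[OF i2] integral_restrict_UNIV)
  also have "\<dots> = M * (cnt Q - cnt P)"
    unfolding P Q vbox_def integral_const by (simp add: right_diff_distrib)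
  finally show "integral Q f - integral P f \<le> M * (cnt Q - cnt P)" .
qed

lemma lip_cont:
  fixes F :: "real \<Rightarrow> real"
  assumes "\<And>s t. 0 \<le> s \<Longrightarrow> s \<le> t \<Longrightarrow> t \<le> 1/2 \<Longrightarrow> \<bar>F t - F s\<bar> \<le> L * (t - s)" "L \<ge> 0"
  shows "continuous_on {0..1/2} F"
proof (rule lipschitz_on_continuous_on)
  show "L-lipschitz_on {0..1/2} F"
    unfolding lipschitz_on_def
  proof (intro conjI ballI assms(2))
    fix x y :: real assume xy: "x \<in> {0..1/2}" "y \<in> {0..1/2}"
    show "dist (F x) (F y) \<le> L * dist x y"
    proof (cases "x \<le> y")
      case True then show ?thesis using assms(1)[of x y] xy by (auto simp: dist_real_def abs_minus_commute)
    next
      case False then show ?thesis using assms(1)[of y x] xy by (auto simp: dist_real_def abs_minus_commute)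
    qed
  qed
qed

lemma fam_cont:
  fixes f :: "real^2 \<Rightarrow> real"
  assumes fi: "f integrable_on U" and bd: "\<forall>x\<in>U. 0 \<le> f x \<and> f x \<le> M"
    and fam: "\<And>t. 0 \<le> t \<Longrightarrow> t \<le> 1/2 \<Longrightarrow> (\<exists>a b a' b'. \<Phi> t = vbox a b a' b') \<and> \<Phi> t \<subseteq> U"
    and mono: "\<And>s t. 0 \<le> s \<Longrightarrow> s \<le> t \<Longrightarrow> t \<le> 1/2 \<Longrightarrow>
       (\<Phi> s \<subseteq> \<Phi> t \<and> cnt (\<Phi> t) - cnt (\<Phi> s) \<le> 2*(t-s)) \<or>
       (\<Phi> t \<subseteq> \<Phi> s \<and> cnt (\<Phi> s) - cnt (\<Phi> t) \<le> 2*(t-s))"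
  shows "continuous_on {0..1/2} (\<lambda>t. integral (\<Phi> t) f)"
proof (rule lip_cont)
  have "U \<noteq> {}" using mem_vbox[of "vector[0,0]" 0 0 1 1] by (auto simp: U_def)
  then obtain x0 where "x0 \<in> U" by blast
  then have "0 \<le> M" using bd by force
  then show M0: "M * 2 \<ge> 0" by simp
  fix s t :: real assume st: "0 \<le> s" "s \<le> t" "t \<le> 1/2"
  obtain a b a' b' where fs: "\<Phi> s = vbox a b a' b'" "\<Phi> s \<subseteq> U" using fam[of s] st by auto
  obtain c d c' d' where ft: "\<Phi> t = vbox c d c' d'" "\<Phi> t \<subseteq> U" using fam[of t] st by auto
  from mono[OF st] show "\<bar>integral (\<Phi> t) f - integral (\<Phi> s) f\<bar> \<le> (M * 2) * (t - s)"
  proof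
    assume h: "\<Phi> s \<subseteq> \<Phi> t \<and> cnt (\<Phi> t) - cnt (\<Phi> s) \<le> 2*(t-s)"
    have "M * (cnt (\<Phi> t) - cnt (\<Phi> s)) \<le> M * (2*(t-s))"
      using h M0 by (intro mult_left_mono) auto
    moreover have "M * (2*(t-s)) = (M*2)*(t-s)" by simp
    moreover note box_diff[OF fi bd fs(1) ft(1) conjunct1[OF h] ft(2)]
    ultimately show ?thesis by linarith
  next
    assume h: "\<Phi> t \<subseteq> \<Phi> s \<and> cnt (\<Phi> s) - cnt (\<Phi> t) \<le> 2*(t-s)"
    have "M * (cnt (\<Phi> s) - cnt (\<Phi> t)) \<le> M * (2*(t-s))"
      using h M0 by (intro mult_left_mono) auto
    moreover have "M * (2*(t-s)) = (M*2)*(t-s)" by simp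
    moreover note box_diff[OF fi bd ft(1) fs(1) conjunct1[OF h] fs(2)]
    ultimately show ?thesis by linarith
  qed
qed



definition At :: "real \<Rightarrow> (real^2) set" where "At t = vbox 0 0 t t"
definition B1 :: "real \<Rightarrow> (real^2) set" where "B1 t = vbox t 0 1 (1-t)"
definition B2 :: "real \<Rightarrow> (real^2) set" where "B2 t = vbox t t 1 1"
definition B3 :: "real \<Rightarrow> (real^2) set" where "B3 t = vbox 0 t (1-t) 1"

definition hh :: "(real^2 \<Rightarrow> real) \<Rightarrow> real \<Rightarrow> real" where
  "hh f t = integral (At t) f - max (integral (B1 t) f) (max (integral (B2 t) f) (integral (B3 t) f))"

definition psq :: "(real^2) set \<Rightarrow> bool" where
  "psq P \<longleftrightarrow> (\<exists>x y s. s > 0 \<and> P = vbox x y (x+s) (y+s) \<and> P \<subseteq> U)"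

definition good :: "(real^2 \<Rightarrow> real) \<Rightarrow> (real^2 \<Rightarrow> real) \<Rightarrow> (real^2) set \<Rightarrow> (real^2) set \<Rightarrow> bool" where
  "good fa fb P Q \<longleftrightarrow> psq P \<and> psq Q \<and> interior P \<inter> interior Q = {} \<and>
     integral P fa \<ge> integral Q fa \<and> integral Q fb \<ge> integral P fb \<and>
     4 * integral P fa \<ge> integral U fa \<and> 4 * integral Q fb \<ge> integral U fb"

lemma good_swap: "good fa fb P Q \<Longrightarrow> good fb fa Q P"
  unfolding good_def by auto

lemma psq_At: "0 < t \<Longrightarrow> t \<le> 1 \<Longrightarrow> psq (At t)"
  unfolding psq_def At_def U_def
  by (rule exI[of _ 0], rule exI[of _ 0], rule exI[of _ t]) (auto simp: mem_vbox)

lemma psq_B1: "0 \<le> t \<Longrightarrow> t < 1 \<Longrightarrow> psq (B1 t)"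
  unfolding psq_def B1_def U_def
  by (rule exI[of _ t], rule exI[of _ 0], rule exI[of _ "1-t"]) (auto simp: mem_vbox)

lemma psq_B2: "0 \<le> t \<Longrightarrow> t < 1 \<Longrightarrow> psq (B2 t)"
  unfolding psq_def B2_def U_def
  by (rule exI[of _ t], rule exI[of _ t], rule exI[of _ "1-t"]) (auto simp: mem_vbox)

lemma psq_B3: "0 \<le> t \<Longrightarrow> t < 1 \<Longrightarrow> psq (B3 t)"
  unfolding psq_def B3_def U_def
  by (rule exI[of _ 0], rule exI[of _ t], rule exI[of _ "1-t"]) (auto simp: mem_vbox)

lemma int_disj:
  assumes "0 \<le> t" "t \<le> 1/2"
  shows "interior (At t) \<inter> interior (B1 t) = {}" "interior (At t) \<inter> interior (B2 t) = {}"
    "interior (At t) \<inter> interior (B3 t) = {}"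
  unfolding At_def B1_def B2_def B3_def by (auto simp: mem_vbox_int)

lemma cover: 
  assumes "0 \<le> t" "t \<le> 1/2"
  shows "U \<subseteq> At t \<union> B1 t \<union> B2 t \<union> B3 t"
proof
  fix p assume "p \<in> U"
  then have p: "0 \<le> p$1" "p$1 \<le> 1" "0 \<le> p$2" "p$2 \<le> 1" by (auto simp: U_def mem_vbox)
  show "p \<in> At t \<union> B1 t \<union> B2 t \<union> B3 t"
  proof (cases "p$1 \<le> t")
    case True
    then show ?thesis using p assms by (cases "p$2 \<le> t") (auto simp: At_def B3_def mem_vbox)
  next
    case False
    then show ?thesis using p assms by (cases "p$2 \<le> 1 - t") (auto simp: B1_def B2_def mem_vbox)
  qed
qed

lemma fams_sub:
  assumes "0 \<le> t" "t \<le> 1"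
  shows "At t \<subseteq> U" "B1 t \<subseteq> U" "B2 t \<subseteq> U" "B3 t \<subseteq> U"
  using assms unfolding At_def B1_def B2_def B3_def U_def by (auto simp: mem_vbox)

lemma cover4:
  fixes f :: "real^2 \<Rightarrow> real"
  assumes fi: "f integrable_on S1" "f integrable_on S2" "f integrable_on S3" "f integrable_on S4" "f integrable_on U"
    and nn: "\<forall>x\<in>U. 0 \<le> f x" and sub: "S1 \<subseteq> U" "S2 \<subseteq> U" "S3 \<subseteq> U" "S4 \<subseteq> U"
    and cov: "U \<subseteq> S1 \<union> S2 \<union> S3 \<union> S4"
  shows "integral U f \<le> integral S1 f + integral S2 f + integral S3 f + integral S4 f"
proof -
  let ?r = "\<lambda>S x. if x \<in> S then f x else 0"
  have ri: "?r S integrable_on UNIV" if "f integrable_on S" for S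
    by (rule integrable_restrict_UNIV[THEN iffD2, OF that])
  have "integral U f = integral UNIV (?r U)" by (simp only: integral_restrict_UNIV)
  also have "\<dots> \<le> integral UNIV (\<lambda>x. ?r S1 x + ?r S2 x + ?r S3 x + ?r S4 x)"
  proof (rule integral_le)
    show "?r U integrable_on UNIV" by (rule ri[OF fi(5)])
    show "(\<lambda>x. ?r S1 x + ?r S2 x + ?r S3 x + ?r S4 x) integrable_on UNIV"
      by (intro integrable_add ri fi)
    fix x
    show "?r U x \<le> ?r S1 x + ?r S2 x + ?r S3 x + ?r S4 x"
    proof (cases "x \<in> U")
      case True
      then have "0 \<le> f x" using nn by blast
      then show ?thesis using True cov by auto
    next
      case False
      then show ?thesis using sub by auto
    qed
  qed
  also have "\<dots> = integral UNIV (?r S1) + integral UNIV (?r S2) + integral UNIV (?r S3) + integral UNIV (?r S4)"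
    by (simp add: integral_add ri fi integrable_add)
  also have "\<dots> = integral S1 f + integral S2 f + integral S3 f + integral S4 f"
    by (simp only: integral_restrict_UNIV)
  finally show ?thesis .
qed



lemma sq_ineq1: "0 \<le> s \<Longrightarrow> s \<le> t \<Longrightarrow> t \<le> 1/2 \<Longrightarrow> t * t - s * s \<le> 2 * (t-s)" for s t :: real
proof -
  assume a: "0 \<le> s" "s \<le> t" "t \<le> 1/2"
  have "(t-s) * (t+s) \<le> (t-s) * 2" using a by (intro mult_left_mono) auto
  then show ?thesis by (simp add: algebra_simps)
qed

lemma sq_ineq2: "0 \<le> s \<Longrightarrow> s \<le> t \<Longrightarrow> t \<le> 1/2 \<Longrightarrow> (1-s) * (1-s) - (1-t) * (1-t) \<le> 2 * (t-s)" for s t :: real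
proof -
  assume a: "0 \<le> s" "s \<le> t" "t \<le> 1/2"
  have "(t-s) * (2-s-t) \<le> (t-s) * 2" using a by (intro mult_left_mono) auto
  then show ?thesis by (simp add: algebra_simps)
qed

lemma cont_fams:
  fixes f :: "real^2 \<Rightarrow> real"
  assumes fi: "f integrable_on U" and bd: "\<forall>x\<in>U. 0 \<le> f x \<and> f x \<le> M"
  shows "continuous_on {0..1/2} (\<lambda>t. integral (At t) f)"
    "continuous_on {0..1/2} (\<lambda>t. integral (B1 t) f)"
    "continuous_on {0..1/2} (\<lambda>t. integral (B2 t) f)"
    "continuous_on {0..1/2} (\<lambda>t. integral (B3 t) f)"
proof -
  show "continuous_on {0..1/2} (\<lambda>t. integral (At t) f)"
  proof (rule fam_cont[OF fi bd])
    fix t :: real assume "0 \<le> t" "t \<le> 1/2"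
    then show "(\<exists>a b a' b'. At t = vbox a b a' b') \<and> At t \<subseteq> U" using fams_sub[of t] by (auto simp: At_def)
  next
    fix s t :: real assume st: "0 \<le> s" "s \<le> t" "t \<le> 1/2"
    have "At s \<subseteq> At t" unfolding At_def using st by (intro vbox_sub) auto
    moreover have "cnt (At t) - cnt (At s) \<le> 2 * (t-s)"
      using sq_ineq1[OF st] st unfolding At_def by (simp add: content_vbox)
    ultimately show "(At s \<subseteq> At t \<and> cnt (At t) - cnt (At s) \<le> 2 * (t-s)) \<or>
       (At t \<subseteq> At s \<and> cnt (At s) - cnt (At t) \<le> 2 * (t-s))" by blast
  qed
  show "continuous_on {0..1/2} (\<lambda>t. integral (B1 t) f)"
  proof (rule fam_cont[OF fi bd])
    fix t :: real assume "0 \<le> t" "t \<le> 1/2"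
    then show "(\<exists>a b a' b'. B1 t = vbox a b a' b') \<and> B1 t \<subseteq> U" using fams_sub[of t] by (auto simp: B1_def)
  next
    fix s t :: real assume st: "0 \<le> s" "s \<le> t" "t \<le> 1/2"
    have "B1 t \<subseteq> B1 s" unfolding B1_def using st by (intro vbox_sub) auto
    moreover have "cnt (B1 s) - cnt (B1 t) \<le> 2 * (t-s)"
      using sq_ineq2[OF st] st unfolding B1_def by (simp add: content_vbox)
    ultimately show "(B1 s \<subseteq> B1 t \<and> cnt (B1 t) - cnt (B1 s) \<le> 2 * (t-s)) \<or>
       (B1 t \<subseteq> B1 s \<and> cnt (B1 s) - cnt (B1 t) \<le> 2 * (t-s))" by blast
  qed
  show "continuous_on {0..1/2} (\<lambda>t. integral (B2 t) f)"
  proof (rule fam_cont[OF fi bd])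
    fix t :: real assume "0 \<le> t" "t \<le> 1/2"
    then show "(\<exists>a b a' b'. B2 t = vbox a b a' b') \<and> B2 t \<subseteq> U" using fams_sub[of t] by (auto simp: B2_def)
  next
    fix s t :: real assume st: "0 \<le> s" "s \<le> t" "t \<le> 1/2"
    have "B2 t \<subseteq> B2 s" unfolding B2_def using st by (intro vbox_sub) auto
    moreover have "cnt (B2 s) - cnt (B2 t) \<le> 2 * (t-s)"
      using sq_ineq2[OF st] st unfolding B2_def by (simp add: content_vbox)
    ultimately show "(B2 s \<subseteq> B2 t \<and> cnt (B2 t) - cnt (B2 s) \<le> 2 * (t-s)) \<or>
       (B2 t \<subseteq> B2 s \<and> cnt (B2 s) - cnt (B2 t) \<le> 2 * (t-s))" by blast
  qed
  show "continuous_on {0..1/2} (\<lambda>t. integral (B3 t) f)"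
  proof (rule fam_cont[OF fi bd])
    fix t :: real assume "0 \<le> t" "t \<le> 1/2"
    then show "(\<exists>a b a' b'. B3 t = vbox a b a' b') \<and> B3 t \<subseteq> U" using fams_sub[of t] by (auto simp: B3_def)
  next
    fix s t :: real assume st: "0 \<le> s" "s \<le> t" "t \<le> 1/2"
    have "B3 t \<subseteq> B3 s" unfolding B3_def using st by (intro vbox_sub) auto
    moreover have "cnt (B3 s) - cnt (B3 t) \<le> 2 * (t-s)"
      using sq_ineq2[OF st] st unfolding B3_def by (simp add: content_vbox)
    ultimately show "(B3 s \<subseteq> B3 t \<and> cnt (B3 t) - cnt (B3 s) \<le> 2 * (t-s)) \<or>
       (B3 t \<subseteq> B3 s \<and> cnt (B3 s) - cnt (B3 t) \<le> 2 * (t-s))" by blast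
  qed
qed

lemma cont_hh:
  fixes f :: "real^2 \<Rightarrow> real"
  assumes fi: "f integrable_on U" and bd: "\<forall>x\<in>U. 0 \<le> f x \<and> f x \<le> M"
  shows "continuous_on {0..1/2} (hh f)"
  unfolding hh_def[abs_def]
  using cont_fams[OF fi bd] by (intro continuous_on_diff continuous_on_max) auto

lemma hh0:
  fixes f :: "real^2 \<Rightarrow> real"
  assumes "integral U f > 0"
  shows "hh f 0 < 0"
proof -
  have "integral (At 0) f = 0" unfolding At_def vbox_def
    by (rule integral_null) (simp add: content_vbox[of 0 0 0 0, unfolded vbox_def])
  moreover have "integral (B2 0) f = integral U f" by (simp add: B2_def U_def)
  moreover have "integral (B2 0) f \<le> max (integral (B1 0) f) (max (integral (B2 0) f) (integral (B3 0) f))" by simp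
  ultimately show ?thesis using assms unfolding hh_def by linarith
qed



lemma fam_int:
  fixes f :: "real^2 \<Rightarrow> real"
  assumes fi: "f integrable_on U" and t: "0 \<le> t" "t \<le> 1"
  shows "f integrable_on At t" "f integrable_on B1 t" "f integrable_on B2 t" "f integrable_on B3 t"
  using int_sub[OF fi fams_sub(1)[OF t, unfolded At_def]] int_sub[OF fi fams_sub(2)[OF t, unfolded B1_def]]
    int_sub[OF fi fams_sub(3)[OF t, unfolded B2_def]] int_sub[OF fi fams_sub(4)[OF t, unfolded B3_def]]
  unfolding At_def B1_def B2_def B3_def by auto

lemma cover_int:
  fixes f :: "real^2 \<Rightarrow> real"
  assumes fi: "f integrable_on U" and nn: "\<forall>x\<in>U. 0 \<le> f x" and t: "0 \<le> t" "t \<le> 1/2"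
  shows "integral U f \<le> integral (At t) f + integral (B1 t) f + integral (B2 t) f + integral (B3 t) f"
proof -
  have t1: "0 \<le> t" "t \<le> 1" using t by auto
  show ?thesis
    by (rule cover4[OF fam_int[OF fi t1] fi nn fams_sub[OF t1] cover[OF t]])
qed

lemma alloc:
  fixes fa fb :: "real^2 \<Rightarrow> real"
  assumes fia: "fa integrable_on U" and fib: "fb integrable_on U"
    and nna: "\<forall>x\<in>U. 0 \<le> fa x" and nnb: "\<forall>x\<in>U. 0 \<le> fb x"
    and t: "0 < t" "t \<le> 1/2" and ha: "hh fa t \<ge> 0" and hb: "hh fb t \<le> 0"
  shows "\<exists>Q. good fa fb (At t) Q"
proof -
  have t0: "0 \<le> t" using t by simp
  define m where "m = max (integral (B1 t) fb) (max (integral (B2 t) fb) (integral (B3 t) fb))"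
  have "m = integral (B1 t) fb \<or> m = integral (B2 t) fb \<or> m = integral (B3 t) fb"
    unfolding m_def by (simp add: max_def)
  then obtain Q where Q: "Q \<in> {B1 t, B2 t, B3 t}" "integral Q fb = m" by blast
  have mb: "integral (B1 t) fb \<le> m" "integral (B2 t) fb \<le> m" "integral (B3 t) fb \<le> m" "integral (At t) fb \<le> m"
    using hb unfolding m_def hh_def by auto
  have ma: "integral (B1 t) fa \<le> integral (At t) fa" "integral (B2 t) fa \<le> integral (At t) fa"
    "integral (B3 t) fa \<le> integral (At t) fa"
    using ha unfolding hh_def by auto
  have ca: "integral U fa \<le> integral (At t) fa + integral (B1 t) fa + integral (B2 t) fa + integral (B3 t) fa"
    by (rule cover_int[OF fia nna t0 t(2)])
  have cb: "integral U fb \<le> integral (At t) fb + integral (B1 t) fb + integral (B2 t) fb + integral (B3 t) fb"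
    by (rule cover_int[OF fib nnb t0 t(2)])
  have t1: "t < 1" using t by simp
  have props: "psq Q \<and> interior (At t) \<inter> interior Q = {} \<and> integral Q fa \<le> integral (At t) fa"
    using Q(1) psq_B1[OF t0 t1] psq_B2[OF t0 t1] psq_B3[OF t0 t1] int_disj[OF t0 t(2)] ma by auto
  have "good fa fb (At t) Q"
    unfolding good_def using props psq_At[of t] t Q(2) mb ma ca cb by auto
  then show ?thesis by blast
qed

lemma param_main:
  fixes f1 f2 :: "real^2 \<Rightarrow> real"
  assumes fi1: "f1 integrable_on U" and fi2: "f2 integrable_on U"
    and bd1: "\<forall>x\<in>U. 0 \<le> f1 x \<and> f1 x \<le> M1" and bd2: "\<forall>x\<in>U. 0 \<le> f2 x \<and> f2 x \<le> M2"
    and pos1: "integral U f1 > 0" and pos2: "integral U f2 > 0"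
    and h1: "hh f1 (1/2) \<ge> 0"
  shows "\<exists>P Q. good f1 f2 P Q"
proof -
  define k where "k t = max (hh f1 t) (hh f2 t)" for t
  have kc: "continuous_on {0..1/2} k"
    unfolding k_def[abs_def] using cont_hh[OF fi1 bd1] cont_hh[OF fi2 bd2] by (intro continuous_on_max)
  have k0: "k 0 < 0" using hh0[OF pos1] hh0[OF pos2] by (simp add: k_def)
  have k1: "k (1/2) \<ge> 0" using h1 by (simp add: k_def)
  obtain t where t: "0 \<le> t" "t \<le> 1/2" "k t = 0" using IVT'[of k 0 0 "1/2", OF _ k1 _ kc] k0 by auto
  have tp: "0 < t" using t k0 by (cases "t = 0") auto
  have nn1: "\<forall>x\<in>U. 0 \<le> f1 x" and nn2: "\<forall>x\<in>U. 0 \<le> f2 x" using bd1 bd2 by auto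
  have "(hh f1 t = 0 \<and> hh f2 t \<le> 0) \<or> (hh f2 t = 0 \<and> hh f1 t \<le> 0)"
    using t(3) unfolding k_def by (auto simp: max_def split: if_splits)
  then show ?thesis
  proof
    assume a: "hh f1 t = 0 \<and> hh f2 t \<le> 0"
    then obtain Q where "good f1 f2 (At t) Q" using alloc[OF fi1 fi2 nn1 nn2 tp t(2)] by auto
    then show ?thesis by blast
  next
    assume a: "hh f2 t = 0 \<and> hh f1 t \<le> 0"
    then obtain Q where "good f2 f1 (At t) Q" using alloc[OF fi2 fi1 nn2 nn1 tp t(2)] by auto
    then show ?thesis using good_swap by blast
  qed
qed



lemma gmap_coords:
  assumes r: "r > 0" and u: "norm u = 1" and w: "norm w = 1" and uw: "u \<bullet> w = 0"
  shows "(gmap c u w r p - c) \<bullet> u = p$1 * r" "(gmap c u w r p - c) \<bullet> w = p$2 * r"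
proof -
  have uu: "u \<bullet> u = 1" using u by (simp add: norm_eq_sqrt_inner)
  have ww: "w \<bullet> w = 1" using w by (simp add: norm_eq_sqrt_inner)
  have wu: "w \<bullet> u = 0" using uw by (simp add: inner_commute)
  show "(gmap c u w r p - c) \<bullet> u = p$1 * r" "(gmap c u w r p - c) \<bullet> w = p$2 * r"
    by (simp_all add: gmap_def inner_add_left uu ww uw wu)
qed

lemma gmap_inj:
  assumes r: "r > 0" and u: "norm u = 1" and w: "norm w = 1" and uw: "u \<bullet> w = 0"
  shows "inj (gmap c u w r)"
proof (rule injI)
  fix p q assume "gmap c u w r p = gmap c u w r q"
  then have "p$1 * r = q$1 * r" "p$2 * r = q$2 * r"
    using gmap_coords[OF assms, of c p] gmap_coords[OF assms, of c q] by auto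
  then have "p$1 = q$1" "p$2 = q$2" using r by auto
  then show "p = q" by (simp add: vec_eq_iff forall_2)
qed

lemma interior_image_disj:
  fixes g :: "real^2 \<Rightarrow> real^2"
  assumes inj: "inj g" and cont: "continuous_on UNIV g" and disj: "interior A \<inter> interior B = {}"
  shows "interior (g ` A) \<inter> interior (g ` B) = {}"
proof (rule ccontr)
  assume "interior (g ` A) \<inter> interior (g ` B) \<noteq> {}"
  then obtain y where yA: "y \<in> interior (g ` A)" and yB: "y \<in> interior (g ` B)" by blast
  then obtain p where p: "y = g p" using interior_subset by blast
  have sub: "g -` interior (g ` S) \<subseteq> interior S" for S
  proof (rule interior_maximal)
    show "g -` interior (g ` S) \<subseteq> S" using interior_subset[of "g ` S"] inj by (auto simp: inj_def)
    show "open (g -` interior (g ` S))" by (rule open_vimage[OF open_interior cont])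
  qed
  have "p \<in> interior A" using sub[of A] yA p by auto
  moreover have "p \<in> interior B" using sub[of B] yB p by auto
  ultimately show False using disj by blast
qed



lemma bounded_bound:
  fixes v :: "real^2 \<Rightarrow> real"
  assumes "bounded (v ` C)"
  obtains M where "\<forall>x\<in>C. v x \<le> M"
proof -
  from assms obtain a where a: "\<forall>x\<in>v ` C. norm x \<le> a" by (auto simp: bounded_iff)
  have "\<forall>x\<in>C. v x \<le> a"
  proof
    fix x assume "x \<in> C"
    then have "norm (v x) \<le> a" using a by blast
    then show "v x \<le> a" by simp
  qed
  then show thesis using that by blast
qed

lemma lift_main:
  fixes v1 v2 :: "real^2 \<Rightarrow> real"
  assumes r: "r > 0" and u: "norm u = 1" and w: "norm w = 1" and uw: "u \<bullet> w = 0"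
    and C: "C = gmap c u w r ` U"
    and vd1: "value_density v1 C" and vd2: "value_density v2 C"
    and hq: "\<forall>x\<in>{0,1/2}. \<forall>y\<in>{0,1/2}. val v1 (gmap c u w r ` vbox x y (x+1/2) (y+1/2)) \<le> val v1 (gmap c u w r ` vbox 0 0 (1/2) (1/2))"
  shows "\<exists>X1 X2. ef_square_alloc2 C v1 v2 X1 X2 \<and> min (val v1 X1 / val v1 C) (val v2 X2 / val v2 C) \<ge> 1/4"
proof -
  let ?g = "gmap c u w r"
  define K where "K = \<bar>det (matrix (lmap u w r))\<bar>"
  define f1 where "f1 x = v1 (?g x)" for x
  define f2 where "f2 x = v2 (?g x)" for x
  note vi1 = val_image[OF r u w uw vd1[unfolded C], folded K_def, folded f1_def[abs_def]]
  note vi2 = val_image[OF r u w uw vd2[unfolded C], folded K_def, folded f2_def[abs_def]]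
  have Kp: "K > 0" using vi1 by blast
  have fi1: "f1 integrable_on U" and fi2: "f2 integrable_on U" using vi1 vi2 by blast+
  have V1: "val v1 (?g ` vbox a b a' b') = K * integral (vbox a b a' b') f1" if "vbox a b a' b' \<subseteq> U" for a b a' b'
    using vi1(3)[OF that] .
  have V2: "val v2 (?g ` vbox a b a' b') = K * integral (vbox a b a' b') f2" if "vbox a b a' b' \<subseteq> U" for a b a' b'
    using vi2(3)[OF that] .
  have UU: "U = vbox 0 0 1 1" by (simp add: U_def)
  have VC1: "val v1 C = K * integral U f1" using V1[of 0 0 1 1] by (simp add: C UU)
  have VC2: "val v2 C = K * integral U f2" using V2[of 0 0 1 1] by (simp add: C UU)
  have pos1: "integral U f1 > 0"
  proof -
    have "0 < K * integral U f1" using vd1 VC1 unfolding value_density_def val_def by simp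
    then show ?thesis using Kp zero_less_mult_pos by blast
  qed
  have pos2: "integral U f2 > 0"
  proof -
    have "0 < K * integral U f2" using vd2 VC2 unfolding value_density_def val_def by simp
    then show ?thesis using Kp zero_less_mult_pos by blast
  qed
  obtain M1 where M1: "\<forall>x\<in>C. v1 x \<le> M1" using vd1 bounded_bound unfolding value_density_def by metis
  obtain M2 where M2: "\<forall>x\<in>C. v2 x \<le> M2" using vd2 bounded_bound unfolding value_density_def by metis
  have bd1: "\<forall>x\<in>U. 0 \<le> f1 x \<and> f1 x \<le> M1" using M1 vd1 unfolding value_density_def f1_def C by auto
  have bd2: "\<forall>x\<in>U. 0 \<le> f2 x \<and> f2 x \<le> M2" using M2 vd2 unfolding value_density_def f2_def C by auto
  have qsub: "vbox x y (x+1/2) (y+1/2) \<subseteq> U" if "x \<in> {0,1/2}" "y \<in> {0,1/2}" for x y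
    using that unfolding U_def by (intro vbox_sub) auto
  have hq': "integral (vbox x y (x+1/2) (y+1/2)) f1 \<le> integral (vbox 0 0 (1/2) (1/2)) f1"
    if "x \<in> {0,1/2}" "y \<in> {0,1/2}" for x y
  proof -
    have q00: "vbox 0 0 (1/2) (1/2) \<subseteq> U" unfolding U_def by (intro vbox_sub) auto
    have a: "val v1 (?g ` vbox x y (x+1/2) (y+1/2)) \<le> val v1 (?g ` vbox 0 0 (1/2) (1/2))"
      using hq that by blast
    have b: "val v1 (?g ` vbox x y (x+1/2) (y+1/2)) = K * integral (vbox x y (x+1/2) (y+1/2)) f1"
      by (rule V1[OF qsub[OF that]])
    have c: "val v1 (?g ` vbox 0 0 (1/2) (1/2)) = K * integral (vbox 0 0 (1/2) (1/2)) f1"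
      by (rule V1[OF q00])
    have "K * integral (vbox x y (x+1/2) (y+1/2)) f1 \<le> K * integral (vbox 0 0 (1/2) (1/2)) f1"
      using a b c by linarith
    then show ?thesis using Kp by simp
  qed
  have h1: "hh f1 (1/2) \<ge> 0"
    using hq'[of "1/2" 0] hq'[of "1/2" "1/2"] hq'[of 0 "1/2"]
    unfolding hh_def At_def B1_def B2_def B3_def by simp
  obtain P Q where good: "good f1 f2 P Q" using param_main[OF fi1 fi2 bd1 bd2 pos1 pos2 h1] by blast
  then obtain x y s where P: "s > 0" "P = vbox x y (x+s) (y+s)" "P \<subseteq> U" unfolding good_def psq_def by blast
  obtain x' y' s' where Q: "s' > 0" "Q = vbox x' y' (x'+s') (y'+s')" "Q \<subseteq> U" using good unfolding good_def psq_def by blast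
  let ?X1 = "?g ` P" and ?X2 = "?g ` Q"
  have sq1: "is_square ?X1" using is_square_image[OF P(1) r u w uw] P(2) by simp
  have sq2: "is_square ?X2" using is_square_image[OF Q(1) r u w uw] Q(2) by simp
  have sub1: "?X1 \<subseteq> C" and sub2: "?X2 \<subseteq> C" using P(3) Q(3) C by auto
  have disj: "interior ?X1 \<inter> interior ?X2 = {}"
    by (rule interior_image_disj[OF gmap_inj[OF r u w uw] continuous_gmap]) (use good in \<open>simp add: good_def\<close>)
  have e11: "val v1 ?X1 = K * integral P f1" using V1 P by simp
  have e12: "val v1 ?X2 = K * integral Q f1" using V1 Q by simp
  have e21: "val v2 ?X1 = K * integral P f2" using V2 P by simp
  have e22: "val v2 ?X2 = K * integral Q f2" using V2 Q by simp
  have g: "integral P f1 \<ge> integral Q f1" "integral Q f2 \<ge> integral P f2"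
    "4 * integral P f1 \<ge> integral U f1" "4 * integral Q f2 \<ge> integral U f2"
    using good unfolding good_def by auto
  have ef: "ef_square_alloc2 C v1 v2 ?X1 ?X2"
    unfolding ef_square_alloc2_def
    using sq1 sq2 sub1 sub2 disj val_S_eq[OF vd1 sq1 sub1] val_S_eq[OF vd1 sq2 sub2]
      val_S_eq[OF vd2 sq1 sub1] val_S_eq[OF vd2 sq2 sub2] e11 e12 e21 e22 g Kp
    by (auto intro: mult_left_mono)
  have r1: "val v1 ?X1 / val v1 C \<ge> 1/4"
    unfolding e11 VC1 using g(3) Kp pos1 by (simp add: field_simps)
  have r2: "val v2 ?X2 / val v2 C \<ge> 1/4"
    unfolding e22 VC2 using g(4) Kp pos2 by (simp add: field_simps)
  show ?thesis using ef r1 r2 by auto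
qed



definition rf :: "real \<Rightarrow> real \<Rightarrow> real" where "rf a x = (if a = 0 then x else 1 - x)"

definition rho :: "real \<Rightarrow> real \<Rightarrow> real^2 \<Rightarrow> real^2" where
  "rho a b p = vector[rf a (p$1), rf b (p$2)]"

lemma rho_rho: "rho a b (rho a b p) = p"
  by (simp add: rho_def rf_def vec_eq_iff forall_2)

lemma rho_image: "rho a b ` S = {p. rho a b p \<in> S}"
proof (intro set_eqI iffI)
  fix p assume "p \<in> rho a b ` S"
  then show "p \<in> {p. rho a b p \<in> S}" using rho_rho by auto
next
  fix p assume "p \<in> {p. rho a b p \<in> S}"
  then have "rho a b (rho a b p) \<in> rho a b ` S" by blast
  then show "p \<in> rho a b ` S" by (simp add: rho_rho)
qed

lemma rho_vbox:
  "rho a b ` vbox x y x' y' = vbox (if a = 0 then x else 1 - x') (if b = 0 then y else 1 - y')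
      (if a = 0 then x' else 1 - x) (if b = 0 then y' else 1 - y)"
  unfolding rho_image by (auto simp: mem_vbox rho_def rf_def)

lemma gmap_reflect:
  assumes a: "a \<in> {0,1/2}" and b: "b \<in> {0,1/2}"
  shows "gmap (c + ((2*a)*r) *\<^sub>R u + ((2*b)*r) *\<^sub>R w) ((1-4*a) *\<^sub>R u) ((1-4*b) *\<^sub>R w) r p = gmap c u w r (rho a b p)"
proof -
  from a have "a = 0 \<or> a = 1/2" by auto
  moreover from b have "b = 0 \<or> b = 1/2" by auto
  ultimately show ?thesis
    by (elim disjE; hypsubst; simp add: gmap_def rho_def rf_def scaleR_diff_left left_diff_distrib; simp add: algebra_simps)
qed

lemma reflect_rep:
  assumes u: "norm u = 1" and w: "norm w = 1" and uw: "u \<bullet> w = 0" and a: "a \<in> {0,1/2}" and b: "b \<in> {0,1/2}"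
  shows "norm ((1-4*a) *\<^sub>R u) = 1" "norm ((1-4*b) *\<^sub>R w) = 1" "((1-4*a) *\<^sub>R u) \<bullet> ((1-4*b) *\<^sub>R w) = 0"
  using u w uw a b by auto



definition qf :: "real \<Rightarrow> real \<Rightarrow> real" where "qf a x = (if a = 0 then x else 1/2 - x)"

lemma rho_quarter:
  "rho a b ` vbox x y (x+1/2) (y+1/2) = vbox (qf a x) (qf b y) (qf a x + 1/2) (qf b y + 1/2)"
  unfolding rho_vbox qf_def by (cases "a = 0"; cases "b = 0") simp_all

lemma qf_mem: "x \<in> {0,1/2} \<Longrightarrow> qf a x \<in> {0,1/2}"
  unfolding qf_def by auto

lemma qf_0: "a \<in> {0,1/2} \<Longrightarrow> qf a 0 = a"
  unfolding qf_def by auto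

lemma rho_U: "rho a b ` U = U"
  unfolding U_def rho_vbox by simp

lemma max4:
  fixes q :: "real \<Rightarrow> real \<Rightarrow> real"
  shows "\<exists>a\<in>{0,1/2}. \<exists>b\<in>{0,1/2}. \<forall>x\<in>{0,1/2}. \<forall>y\<in>{0,1/2}. q x y \<le> q a b"
proof -
  have "(q 0 0 \<ge> q (1/2) 0 \<and> q 0 0 \<ge> q 0 (1/2) \<and> q 0 0 \<ge> q (1/2) (1/2)) \<or>
        (q (1/2) 0 \<ge> q 0 0 \<and> q (1/2) 0 \<ge> q 0 (1/2) \<and> q (1/2) 0 \<ge> q (1/2) (1/2)) \<or>
        (q 0 (1/2) \<ge> q 0 0 \<and> q 0 (1/2) \<ge> q (1/2) 0 \<and> q 0 (1/2) \<ge> q (1/2) (1/2)) \<or>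
        (q (1/2) (1/2) \<ge> q 0 0 \<and> q (1/2) (1/2) \<ge> q (1/2) 0 \<and> q (1/2) (1/2) \<ge> q 0 (1/2))"
    by argo
  then show ?thesis by auto
qed

theorem theorem1:
  fixes C :: "(real^2) set"
  assumes "is_square C"
  shows "\<forall>v1 v2. value_density v1 C \<and> value_density v2 C \<longrightarrow>
           (\<forall>\<epsilon>>0. \<exists>X1 X2. ef_square_alloc2 C v1 v2 X1 X2 \<and>
              min (val v1 X1 / val v1 C) (val v2 X2 / val v2 C) \<ge> 1/4 - \<epsilon>)"
proof (intro allI impI)
  fix v1 v2 :: "real^2 \<Rightarrow> real" and \<epsilon> :: real
  assume vd: "value_density v1 C \<and> value_density v2 C" and eps: "\<epsilon> > 0"
  then have vd1: "value_density v1 C" and vd2: "value_density v2 C" by auto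
  obtain c u w r where r: "r > 0" and u: "norm u = 1" and w: "norm w = 1" and uw: "u \<bullet> w = 0"
    and Ceq: "C = {c + (a * r) *\<^sub>R u + (b * r) *\<^sub>R w | a b. a \<in> {0..1} \<and> b \<in> {0..1}}"
    using assms unfolding is_square_def by blast
  have Cg: "C = gmap c u w r ` U" using Ceq sq_eq_image[OF r] by simp
  define q where "q x y = val v1 (gmap c u w r ` vbox x y (x+1/2) (y+1/2))" for x y
  obtain a b where a: "a \<in> {0,1/2}" and b: "b \<in> {0,1/2}"
    and qmax: "\<forall>x\<in>{0,1/2}. \<forall>y\<in>{0,1/2}. q x y \<le> q a b"
    using max4[of q] by blast
  define c' where "c' = c + ((2*a)*r) *\<^sub>R u + ((2*b)*r) *\<^sub>R w"
  define u' where "u' = (1-4*a) *\<^sub>R u"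
  define w' where "w' = (1-4*b) *\<^sub>R w"
  note rr = reflect_rep[OF u w uw a b, folded u'_def w'_def]
  have geq: "gmap c' u' w' r = gmap c u w r \<circ> rho a b"
    unfolding c'_def u'_def w'_def by (rule ext) (simp add: gmap_reflect[OF a b])
  have gimg: "gmap c' u' w' r ` S = gmap c u w r ` (rho a b ` S)" for S
    unfolding geq by (simp add: image_comp)
  have C': "C = gmap c' u' w' r ` U" unfolding gimg rho_U Cg ..
  have hq: "\<forall>x\<in>{0,1/2}. \<forall>y\<in>{0,1/2}. val v1 (gmap c' u' w' r ` vbox x y (x+1/2) (y+1/2)) \<le> val v1 (gmap c' u' w' r ` vbox 0 0 (1/2) (1/2))"
  proof (intro ballI)
    fix x y :: real assume x: "x \<in> {0,1/2}" and y: "y \<in> {0,1/2}"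
    have e1: "val v1 (gmap c' u' w' r ` vbox x y (x+1/2) (y+1/2)) = q (qf a x) (qf b y)"
      unfolding gimg rho_quarter q_def ..
    have e0: "val v1 (gmap c' u' w' r ` vbox 0 0 (1/2) (1/2)) = q a b"
      using rho_quarter[of a b 0 0] qf_0[OF a] qf_0[OF b] unfolding gimg q_def by simp
    show "val v1 (gmap c' u' w' r ` vbox x y (x+1/2) (y+1/2)) \<le> val v1 (gmap c' u' w' r ` vbox 0 0 (1/2) (1/2))"
      unfolding e1 e0 using qmax qf_mem[OF x, of a] qf_mem[OF y, of b] by blast
  qed
  obtain X1 X2 where X: "ef_square_alloc2 C v1 v2 X1 X2" "min (val v1 X1 / val v1 C) (val v2 X2 / val v2 C) \<ge> 1/4"
    using lift_main[OF r rr C' vd1 vd2 hq] by blast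
  show "\<exists>X1 X2. ef_square_alloc2 C v1 v2 X1 X2 \<and> min (val v1 X1 / val v1 C) (val v2 X2 / val v2 C) \<ge> 1/4 - \<epsilon>"
  proof (intro exI conjI)
    show "ef_square_alloc2 C v1 v2 X1 X2" by (rule X(1))
    show "min (val v1 X1 / val v1 C) (val v2 X2 / val v2 C) \<ge> 1/4 - \<epsilon>" using X(2) eps by linarith
  qed
qed

end
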